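(* There is a function $h:\mathbb{N}^2\to\mathbb{N}$ such that for any $k,t\in\mathbb{N}$ the following holds: if $G$ is a graph that does not contain a half-graph of order $t$ as a semi-induced subgraph, and $u$ and $v$ are vertices in the same connected component of the $k$-near-twin graph $NT_k(G)$, then $u$ and $v$ are $h(k,t)$-near-twins in $G$.
   Context: $N^G(v)$ denotes the set of neighbors of $v$ in $G$. Two vertices $u,v$ are $k$-near-twins in $G$ if $|N^G(u)\,\Delta\,N^G(v)|\le k$. The $k$-near-twin graph $NT_k(G)$ has vertex set $V(G)$, with $u,v$ adjacent iff they are $k$-near-twins in $G$. $G$ contains a half-graph of order $t$ as a semi-induced subgraph if there are distinct vertices $u_1,\dots,u_t,w_1,\dots,w_t$ of $G$ such that $u_iw_j\in E(G)$ iff $i\le j$ (edges among the $u_i$'s and among the $w_j$'s are arbitrary). *)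

theory Defs
  imports Main
begin

definition simple_graph :: "'a set \<Rightarrow> ('a \<Rightarrow> 'a \<Rightarrow> bool) \<Rightarrow> bool" where
  "simple_graph V E \<longleftrightarrow> finite V \<and> (\<forall>x y. E x y \<longrightarrow> x \<in> V \<and> y \<in> V)
     \<and> (\<forall>x y. E x y \<longrightarrow> E y x) \<and> (\<forall>x. \<not> E x x)"

definition nbhd :: "'a set \<Rightarrow> ('a \<Rightarrow> 'a \<Rightarrow> bool) \<Rightarrow> 'a \<Rightarrow> 'a set" where
  "nbhd V E v = {w \<in> V. E v w}"

definition near_twins :: "nat \<Rightarrow> 'a set \<Rightarrow> ('a \<Rightarrow> 'a \<Rightarrow> bool) \<Rightarrow> 'a \<Rightarrow> 'a \<Rightarrow> bool" where
  "near_twins k V E u v \<longleftrightarrow>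
     card ((nbhd V E u - nbhd V E v) \<union> (nbhd V E v - nbhd V E u)) \<le> k"

definition NT_adj :: "nat \<Rightarrow> 'a set \<Rightarrow> ('a \<Rightarrow> 'a \<Rightarrow> bool) \<Rightarrow> 'a \<Rightarrow> 'a \<Rightarrow> bool" where
  "NT_adj k V E x y \<longleftrightarrow> x \<in> V \<and> y \<in> V \<and> x \<noteq> y \<and> near_twins k V E x y"

definition same_NT_component :: "nat \<Rightarrow> 'a set \<Rightarrow> ('a \<Rightarrow> 'a \<Rightarrow> bool) \<Rightarrow> 'a \<Rightarrow> 'a \<Rightarrow> bool" where
  "same_NT_component k V E u v \<longleftrightarrow> u \<in> V \<and> v \<in> V \<and> (NT_adj k V E)\<^sup>*\<^sup>* u v"

definition has_semi_induced_half_graph :: "'a set \<Rightarrow> ('a \<Rightarrow> 'a \<Rightarrow> bool) \<Rightarrow> nat \<Rightarrow> bool" where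
  "has_semi_induced_half_graph V E t \<longleftrightarrow>
     (\<exists>u w :: nat \<Rightarrow> 'a.
        u ` {1..t} \<subseteq> V \<and> w ` {1..t} \<subseteq> V \<and>
        inj_on u {1..t} \<and> inj_on w {1..t} \<and> u ` {1..t} \<inter> w ` {1..t} = {} \<and>
        (\<forall>i\<in>{1..t}. \<forall>j\<in>{1..t}. E (u i) (w j) \<longleftrightarrow> i \<le> j))"

end

theory Submission
  imports Defs
begin

fun LL :: "nat \<Rightarrow> nat \<Rightarrow> nat" where
  "LL k 0 = 0"
| "LL k (Suc t) = Suc t * LL k t + Suc t + k"

lemma last_exit:
  assumes "R\<^sup>*\<^sup>* a b" "Q b"
  shows "\<exists>c. (\<lambda>x y. R x y \<and> Q x \<and> Q y)\<^sup>*\<^sup>* c b \<and> Q c \<and> (c = a \<or> (\<exists>d. R d c \<and> \<not> Q d))"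
  using assms
proof (induction rule: rtranclp_induct)
  case base
  then show ?case by auto
next
  case (step y z)
  show ?case
  proof (cases "Q y")
    case True
    with step obtain c where c: "(\<lambda>x y. R x y \<and> Q x \<and> Q y)\<^sup>*\<^sup>* c y" "Q c" "c = a \<or> (\<exists>d. R d c \<and> \<not> Q d)"
      by blast
    have "(\<lambda>x y. R x y \<and> Q x \<and> Q y)\<^sup>*\<^sup>* c z"
      using c(1) step True by (simp add: rtranclp.rtrancl_into_rtrancl)
    then show ?thesis using c by blast
  next
    case False
    then show ?thesis using step by blast
  qed
qed

lemma restr_Q:
  assumes "(\<lambda>x y. R x y \<and> Q x \<and> Q y)\<^sup>*\<^sup>* x b" "Q b"
  shows "Q x"
  using assms by (induction rule: converse_rtranclp_induct) auto

lemma restr_R: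
  assumes "(\<lambda>x y. R x y \<and> Q x \<and> Q y)\<^sup>*\<^sup>* x b"
  shows "R\<^sup>*\<^sup>* x b"
  using assms by (induction rule: converse_rtranclp_induct) (auto intro: converse_rtranclp_into_rtranclp)

lemma core:
  fixes N :: "'a \<Rightarrow> 'a set" and V :: "'a set"
  assumes fin: "\<forall>x. finite (N x)" and irr: "\<forall>x. x \<notin> N x"
  shows "\<forall>R a b X. (\<forall>x y. R x y \<longrightarrow> card ((N x - N y) \<union> (N y - N x)) \<le> k) \<longrightarrow>
     (\<forall>x y. R x y \<longrightarrow> y \<in> V) \<longrightarrow> a \<in> V \<longrightarrow> R\<^sup>*\<^sup>* a b \<longrightarrow> X \<subseteq> N a \<longrightarrow> X \<inter> N b = {} \<longrightarrow>
     LL k t < card X \<longrightarrow>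
    (\<exists>r c. (\<forall>i\<in>{1..t}. r i \<in> V \<and> R\<^sup>*\<^sup>* (r i) b \<and> card (N (r i) \<inter> X) \<le> LL k t) \<and>
       (\<forall>j\<in>{1..t}. c j \<in> X) \<and>
       (\<forall>i\<in>{1..t}. \<forall>j\<in>{1..t}. c j \<noteq> r i \<and> (c j \<in> N (r i) \<longleftrightarrow> i \<le> j)))"
proof (induction t)
  case 0
  then show ?case by auto
next
  case (Suc t)
  show ?case
  proof (intro allI impI)
    fix R a b X
    assume kb: "\<forall>x y. R x y \<longrightarrow> card ((N x - N y) \<union> (N y - N x)) \<le> k"
      and inV: "\<forall>x y. R x y \<longrightarrow> y \<in> V" and aV: "a \<in> V" and ab: "R\<^sup>*\<^sup>* a b"
      and Xa: "X \<subseteq> N a" and Xb: "X \<inter> N b = {}" and cardX: "LL k (Suc t) < card X"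
    define Lt where "Lt = LL k (Suc t)"
    define Q where "Q = (\<lambda>x. card (N x \<inter> X) \<le> Lt)"
    define R' where "R' = (\<lambda>x y. R x y \<and> Q x \<and> Q y)"
    have finX: "finite X" using Xa fin finite_subset by blast
    have Qb: "Q b" using Xb unfolding Q_def by (simp add: Int_commute)
    have nQa: "\<not> Q a" using Xa cardX unfolding Q_def Lt_def
      by (simp add: Int_absorb1)
    obtain c where c1: "R'\<^sup>*\<^sup>* c b" and Qc: "Q c" and c3: "c = a \<or> (\<exists>d. R d c \<and> \<not> Q d)"
      using last_exit[of R a b Q, OF ab Qb] unfolding R'_def by blast
    from c3 nQa Qc obtain d where Rdc: "R d c" and nQd: "\<not> Q d" by blast
    have cV: "c \<in> V" using inV Rdc by blast
    define X' where "X' = N c \<inter> X"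
    have "N d \<inter> X \<subseteq> X' \<union> ((N d - N c) \<union> (N c - N d))" unfolding X'_def by blast
    hence "card (N d \<inter> X) \<le> card (X' \<union> ((N d - N c) \<union> (N c - N d)))"
      by (intro card_mono) (use fin in \<open>auto simp: X'_def\<close>)
    also have "\<dots> \<le> card X' + card ((N d - N c) \<union> (N c - N d))" by (rule card_Un_le)
    also have "\<dots> \<le> card X' + k" using kb Rdc by auto
    finally have cX': "Lt < card X' + k" using nQd unfolding Q_def by simp
    have X'X: "X' \<subseteq> X" and X'c: "X' \<subseteq> N c" unfolding X'_def by auto
    have finX': "finite X'" using X'X finX finite_subset by blast
    have bigX': "Suc t * LL k t + Suc t < card X'" using cX' unfolding Lt_def by simp
    have R'k: "\<forall>x y. R' x y \<longrightarrow> card ((N x - N y) \<union> (N y - N x)) \<le> k" using kb unfolding R'_def by auto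
    have R'V: "\<forall>x y. R' x y \<longrightarrow> y \<in> V" using inV unfolding R'_def by auto
    have X'b: "X' \<inter> N b = {}" using Xb X'X by blast
    have ltX': "LL k t < card X'" using bigX' by (cases "LL k t") auto
    have "\<exists>r c. (\<forall>i\<in>{1..t}. r i \<in> V \<and> R'\<^sup>*\<^sup>* (r i) b \<and> card (N (r i) \<inter> X') \<le> LL k t) \<and>
       (\<forall>j\<in>{1..t}. c j \<in> X') \<and>
       (\<forall>i\<in>{1..t}. \<forall>j\<in>{1..t}. c j \<noteq> r i \<and> (c j \<in> N (r i) \<longleftrightarrow> i \<le> j))"
      by (rule Suc.IH[rule_format, of R' c b X', OF R'k[rule_format] R'V[rule_format] cV c1 X'c X'b ltX'])
    then obtain r cc where
      r1: "\<forall>i\<in>{1..t}. r i \<in> V \<and> R'\<^sup>*\<^sup>* (r i) b \<and> card (N (r i) \<inter> X') \<le> LL k t"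
      and c1': "\<forall>j\<in>{1..t}. cc j \<in> X'"
      and rc: "\<forall>i\<in>{1..t}. \<forall>j\<in>{1..t}. cc j \<noteq> r i \<and> (cc j \<in> N (r i) \<longleftrightarrow> i \<le> j)"
      by blast
    define B where "B = (\<Union>i\<in>{1..t}. N (r i) \<inter> X') \<union> r ` {1..t} \<union> {c}"
    have "card (\<Union>i\<in>{1..t}. N (r i) \<inter> X') \<le> (\<Sum>i\<in>{1..t}. card (N (r i) \<inter> X'))"
      by (rule card_UN_le) simp
    also have "\<dots> \<le> (\<Sum>i\<in>{1..t}. LL k t)" by (rule sum_mono) (use r1 in auto)
    finally have u1: "card (\<Union>i\<in>{1..t}. N (r i) \<inter> X') \<le> t * LL k t" by simp
    have u2: "card (r ` {1..t}) \<le> t" using card_image_le[of "{1..t}" r] by simp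
    have "card B \<le> card ((\<Union>i\<in>{1..t}. N (r i) \<inter> X') \<union> r ` {1..t}) + card {c}"
      unfolding B_def by (rule card_Un_le)
    also have "\<dots> \<le> card (\<Union>i\<in>{1..t}. N (r i) \<inter> X') + card (r ` {1..t}) + 1"
      using card_Un_le by simp
    finally have "card B \<le> t * LL k t + t + 1" using u1 u2 by linarith
    hence "card B < card X'" using bigX' by simp
    moreover have finB: "finite B" unfolding B_def using fin by auto
    ultimately have "\<not> X' \<subseteq> B" using card_mono[OF finB, of X'] by linarith
    then obtain e where eX': "e \<in> X'" and eB: "e \<notin> B" by blast
    define r' where "r' = (\<lambda>i::nat. if i = 1 then c else r (i - 1))"
    define c' where "c' = (\<lambda>j::nat. if j = 1 then e else cc (j - 1))"
    have A1: "\<forall>i\<in>{1..Suc t}. r' i \<in> V \<and> R\<^sup>*\<^sup>* (r' i) b \<and> card (N (r' i) \<inter> X) \<le> LL k (Suc t)"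
    proof
      fix i assume i: "i \<in> {1..Suc t}"
      show "r' i \<in> V \<and> R\<^sup>*\<^sup>* (r' i) b \<and> card (N (r' i) \<inter> X) \<le> LL k (Suc t)"
      proof (cases "i = 1")
        case True
        then show ?thesis using cV restr_R[of R Q c b] c1 Qc unfolding r'_def R'_def Q_def Lt_def by simp
      next
        case False
        hence i1: "i - 1 \<in> {1..t}" using i by auto
        have "R'\<^sup>*\<^sup>* (r (i-1)) b" using r1 i1 by blast
        hence "Q (r (i-1))" "R\<^sup>*\<^sup>* (r (i-1)) b"
          using restr_Q[of R Q "r (i-1)" b] restr_R[of R Q "r (i-1)" b] Qb unfolding R'_def by auto
        then show ?thesis using False r1 i1 unfolding r'_def Q_def Lt_def by auto
      qed
    qed
    have A2: "\<forall>j\<in>{1..Suc t}. c' j \<in> X"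
    proof
      fix j assume j: "j \<in> {1..Suc t}"
      show "c' j \<in> X"
      proof (cases "j = 1")
        case True then show ?thesis using eX' X'X unfolding c'_def by auto
      next
        case False
        hence "j - 1 \<in> {1..t}" using j by auto
        then show ?thesis using False c1' X'X unfolding c'_def by auto
      qed
    qed
    have A3: "\<forall>i\<in>{1..Suc t}. \<forall>j\<in>{1..Suc t}. c' j \<noteq> r' i \<and> (c' j \<in> N (r' i) \<longleftrightarrow> i \<le> j)"
    proof (intro ballI)
      fix i j assume i: "i \<in> {1..Suc t}" and j: "j \<in> {1..Suc t}"
      show "c' j \<noteq> r' i \<and> (c' j \<in> N (r' i) \<longleftrightarrow> i \<le> j)"
      proof (cases "i = 1")
        case True
        show ?thesis
        proof (cases "j = 1")
          case True
          then show ?thesis using \<open>i = 1\<close> eB eX' X'c unfolding c'_def r'_def B_def by auto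
        next
          case False
          hence "j - 1 \<in> {1..t}" using j by auto
          hence "cc (j-1) \<in> X'" using c1' by blast
          then show ?thesis using \<open>i = 1\<close> False X'c irr j unfolding c'_def r'_def by auto
        qed
      next
        case False
        hence i1: "i - 1 \<in> {1..t}" using i by auto
        show ?thesis
        proof (cases "j = 1")
          case True
          have "e \<notin> N (r (i-1))" using eB eX' i1 unfolding B_def by blast
          moreover have "e \<noteq> r (i-1)" using eB i1 unfolding B_def by blast
          ultimately show ?thesis using True False i unfolding c'_def r'_def by auto
        next
          case False
          hence j1: "j - 1 \<in> {1..t}" using j by auto
          have "i - 1 \<le> j - 1 \<longleftrightarrow> i \<le> j" using i j \<open>i \<noteq> 1\<close> False by auto
          then show ?thesis using rc i1 j1 False \<open>i \<noteq> 1\<close> unfolding c'_def r'_def by auto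
        qed
      qed
    qed
    show "\<exists>r c. (\<forall>i\<in>{1..Suc t}. r i \<in> V \<and> R\<^sup>*\<^sup>* (r i) b \<and> card (N (r i) \<inter> X) \<le> LL k (Suc t)) \<and>
       (\<forall>j\<in>{1..Suc t}. c j \<in> X) \<and>
       (\<forall>i\<in>{1..Suc t}. \<forall>j\<in>{1..Suc t}. c j \<noteq> r i \<and> (c j \<in> N (r i) \<longleftrightarrow> i \<le> j))"
      using A1 A2 A3 by blast
  qed
qed

lemma sym_rtranclp_aux:
  assumes "r\<^sup>*\<^sup>* x y" "\<forall>a b. r a b \<longrightarrow> r b a"
  shows "r\<^sup>*\<^sup>* y x"
  using assms
proof (induction rule: rtranclp_induct)
  case base then show ?case by simp
next
  case (step y z)
  then show ?case by (meson converse_rtranclp_into_rtranclp)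
qed

lemma one_side:
  assumes G: "simple_graph V E" and nh: "\<not> has_semi_induced_half_graph V E t"
    and uV: "u \<in> V" and uv: "(NT_adj k V E)\<^sup>*\<^sup>* u v"
  shows "card (nbhd V E u - nbhd V E v) \<le> LL k t"
proof (rule ccontr)
  assume "\<not> ?thesis"
  hence big: "LL k t < card (nbhd V E u - nbhd V E v)" by simp
  define X where "X = nbhd V E u - nbhd V E v"
  have finV: "finite V" using G unfolding simple_graph_def by blast
  have irrE: "\<forall>x. \<not> E x x" using G unfolding simple_graph_def by blast
  have fin: "\<forall>x. finite (nbhd V E x)" using finV unfolding nbhd_def by auto
  have irr: "\<forall>x. x \<notin> nbhd V E x" using irrE unfolding nbhd_def by auto
  have kb: "\<forall>x y. NT_adj k V E x y \<longrightarrow> card ((nbhd V E x - nbhd V E y) \<union> (nbhd V E y - nbhd V E x)) \<le> k"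
    unfolding NT_adj_def near_twins_def by auto
  have inV: "\<forall>x y. NT_adj k V E x y \<longrightarrow> y \<in> V" unfolding NT_adj_def by auto
  have Xu: "X \<subseteq> nbhd V E u" by (simp add: X_def)
  have Xv: "X \<inter> nbhd V E v = {}" by (simp add: X_def Diff_Int_distrib2)
  have bigX: "LL k t < card X" using big by (simp add: X_def)
  have "\<exists>r c. (\<forall>i\<in>{1..t}. r i \<in> V \<and> (NT_adj k V E)\<^sup>*\<^sup>* (r i) v \<and> card (nbhd V E (r i) \<inter> X) \<le> LL k t) \<and>
       (\<forall>j\<in>{1..t}. c j \<in> X) \<and>
       (\<forall>i\<in>{1..t}. \<forall>j\<in>{1..t}. c j \<noteq> r i \<and> (c j \<in> nbhd V E (r i) \<longleftrightarrow> i \<le> j))"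
    by (rule core[of "nbhd V E" k V t, OF fin irr, rule_format, of "NT_adj k V E" u v X,
          OF kb[rule_format] inV[rule_format] uV uv Xu Xv bigX])
  then obtain r c where r0: "\<forall>i\<in>{1..t}. r i \<in> V \<and> (NT_adj k V E)\<^sup>*\<^sup>* (r i) v \<and> card (nbhd V E (r i) \<inter> X) \<le> LL k t"
    and cX: "\<forall>j\<in>{1..t}. c j \<in> X"
    and rc: "\<forall>i\<in>{1..t}. \<forall>j\<in>{1..t}. c j \<noteq> r i \<and> (c j \<in> nbhd V E (r i) \<longleftrightarrow> i \<le> j)"
    by (elim exE conjE)
  have r: "\<forall>i\<in>{1..t}. r i \<in> V" using r0 by simp
  have cV: "\<forall>j\<in>{1..t}. c j \<in> V" using cX unfolding X_def nbhd_def by auto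
  have E_iff: "\<forall>i\<in>{1..t}. \<forall>j\<in>{1..t}. E (r i) (c j) \<longleftrightarrow> i \<le> j"
  proof (intro ballI)
    fix i j assume i: "i \<in> {1..t}" and j: "j \<in> {1..t}"
    have "c j \<in> V" using cV j by blast
    moreover have "c j \<in> nbhd V E (r i) \<longleftrightarrow> i \<le> j" using rc i j by blast
    ultimately show "E (r i) (c j) \<longleftrightarrow> i \<le> j" by (simp add: nbhd_def)
  qed
  have injr: "inj_on r {1..t}"
  proof (rule inj_onI)
    fix i i' assume i: "i \<in> {1..t}" and i': "i' \<in> {1..t}" and eq: "r i = r i'"
    show "i = i'"
    proof (rule ccontr)
      assume "i \<noteq> i'"
      then consider "i < i'" | "i' < i" by linarith
      then show False
      proof cases
        case 1
        have "E (r i) (c i)" using E_iff i by simp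
        moreover have "\<not> E (r i') (c i)" using E_iff i i' 1 by simp
        ultimately show ?thesis using eq by simp
      next
        case 2
        have "E (r i') (c i')" using E_iff i' by simp
        moreover have "\<not> E (r i) (c i')" using E_iff i i' 2 by simp
        ultimately show ?thesis using eq by simp
      qed
    qed
  qed
  have injc: "inj_on c {1..t}"
  proof (rule inj_onI)
    fix j j' assume j: "j \<in> {1..t}" and j': "j' \<in> {1..t}" and eq: "c j = c j'"
    show "j = j'"
    proof (rule ccontr)
      assume "j \<noteq> j'"
      then consider "j < j'" | "j' < j" by linarith
      then show False
      proof cases
        case 1
        have "E (r j') (c j')" using E_iff j' by simp
        moreover have "\<not> E (r j') (c j)" using E_iff j j' 1 by simp
        ultimately show ?thesis using eq by simp
      next
        case 2
        have "E (r j) (c j)" using E_iff j by simp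
        moreover have "\<not> E (r j) (c j')" using E_iff j j' 2 by simp
        ultimately show ?thesis using eq by simp
      qed
    qed
  qed
  have disj: "r ` {1..t} \<inter> c ` {1..t} = {}"
  proof (rule ccontr)
    assume "r ` {1..t} \<inter> c ` {1..t} \<noteq> {}"
    then obtain i j where ij: "i \<in> {1..t}" "j \<in> {1..t}" "r i = c j" by blast
    have "c j \<noteq> r i" using rc ij(1,2) by blast
    with ij(3) show False by simp
  qed
  have rV: "r ` {1..t} \<subseteq> V" using r by blast
  have cV': "c ` {1..t} \<subseteq> V" using cV by blast
  have "has_semi_induced_half_graph V E t"
    unfolding has_semi_induced_half_graph_def
    by (intro exI[of _ r] exI[of _ c] conjI rV cV' injr injc disj E_iff)
  with nh show False by simp
qed

theorem lemma4p5:
  shows "\<exists>h :: nat \<Rightarrow> nat \<Rightarrow> nat. \<forall>k t (V :: nat set) E u v.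
           simple_graph V E \<and> \<not> has_semi_induced_half_graph V E t \<and>
           same_NT_component k V E u v
           \<longrightarrow> near_twins (h k t) V E u v"
proof (rule exI[of _ "\<lambda>k t. 2 * LL k t"], intro allI impI)
  fix k t and V :: "nat set" and E u v
  assume H: "simple_graph V E \<and> \<not> has_semi_induced_half_graph V E t \<and> same_NT_component k V E u v"
  hence G: "simple_graph V E" and nh: "\<not> has_semi_induced_half_graph V E t"
    and uV: "u \<in> V" and vV: "v \<in> V" and uv: "(NT_adj k V E)\<^sup>*\<^sup>* u v"
    unfolding same_NT_component_def by auto
  have symm: "\<forall>a b. NT_adj k V E a b \<longrightarrow> NT_adj k V E b a"
    unfolding NT_adj_def near_twins_def by (auto simp: Un_commute)
  have vu: "(NT_adj k V E)\<^sup>*\<^sup>* v u" using sym_rtranclp_aux[OF uv symm] .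
  have a1: "card (nbhd V E u - nbhd V E v) \<le> LL k t" using one_side[OF G nh uV uv] .
  have a2: "card (nbhd V E v - nbhd V E u) \<le> LL k t" using one_side[OF G nh vV vu] .
  have "card ((nbhd V E u - nbhd V E v) \<union> (nbhd V E v - nbhd V E u))
        \<le> card (nbhd V E u - nbhd V E v) + card (nbhd V E v - nbhd V E u)" by (rule card_Un_le)
  also have "\<dots> \<le> 2 * LL k t" using a1 a2 by simp
  finally show "near_twins (2 * LL k t) V E u v" unfolding near_twins_def .
qed

end
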